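(* Let $\mathcal{X}$ be a set and let $G$ be an undirected graph on vertex set $\mathcal{X}$ with non-negative edge weights. Let $\varepsilon:\mathcal{X}\times\mathcal{X}\to\mathbb{R}\cup\{\infty\}$ be the shortest-path distance in $G$ (sum of edge weights along a path, minimized over paths). Let $M:\mathcal{X}^n\to\mathcal{Y}$ be a randomized algorithm. Suppose that for every pair $x,x'\in\mathcal{X}^n$ differing only in a single entry $i\in[n]$ such that $\{x_i,x'_i\}$ is an edge of $G$ with weight $\varepsilon_0$, we have $D_\infty(M(x)\|M(x'))\le \varepsilon_0$ (respectively, $D_*(M(x)\|M(x'))\le \frac12\varepsilon_0^2$). Then $M$ is $\varepsilon$-$\nabla$DP (respectively, $\varepsilon$-$\nabla$CDP).
   Context: For probability distributions $P,Q$ on a common space with $P\ll Q$: for $\lambda\in(1,\infty)$, $D_\lambda(P\|Q)=\frac{1}{\lambda-1}\log \mathbb{E}_{X\sim P}[(P(X)/Q(X))^{\lambda-1}]$ (Radon–Nikodym derivative), $D_*(P\|Q)=\sup_{\lambda\in(1,\infty)}\frac1\lambda D_\lambda(P\|Q)$, and $D_\infty(P\|Q)=\sup_{S:P(S)>0}\log(P(S)/Q(S))$; if $P\not\ll Q$ all these are $\infty$. For a symmetric non-negative function $\varepsilon:\mathcal{X}\times\mathcal{X}\to\mathbb{R}$, a randomized $M:\mathcal{X}^n\to\mathcal{Y}$ is $\varepsilon$-partially DP ($\varepsilon$-$\nabla$DP) if for all $x,x'\in\mathcal{X}^n$ differing only in entry $i$ and all measurable $S$, $\Pr[M(x)\in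 S]\le e^{\varepsilon(x_i,x'_i)}\Pr[M(x')\in S]$; it is $\varepsilon$-partially CDP ($\varepsilon$-$\nabla$CDP) if for all such $x,x'$, $D_*(M(x)\|M(x'))\le\frac12\varepsilon(x_i,x'_i)^2$. *)

theory Defs
  imports "HOL-Probability.Probability"
begin

text \<open>An undirected graph on the vertex type 'a is a set E of edges, each a two-element
  set of vertices; w assigns a weight to each edge.\<close>

definition undirected_graph :: "'a set set \<Rightarrow> bool" where
  "undirected_graph E \<longleftrightarrow> (\<forall>e\<in>E. card e = 2)"

definition is_walk :: "'a set set \<Rightarrow> 'a list \<Rightarrow> bool" where
  "is_walk E p \<longleftrightarrow> p \<noteq> [] \<and> (\<forall>k. Suc k < length p \<longrightarrow> {p ! k, p ! Suc k} \<in> E)"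

fun walk_weight :: "('a set \<Rightarrow> real) \<Rightarrow> 'a list \<Rightarrow> real" where
  "walk_weight w [] = 0"
| "walk_weight w [a] = 0"
| "walk_weight w (a # b # rest) = w {a, b} + walk_weight w (b # rest)"

text \<open>Shortest-path distance (infimum over empty set = \<infinity>).\<close>
definition sp_dist :: "'a set set \<Rightarrow> ('a set \<Rightarrow> real) \<Rightarrow> 'a \<Rightarrow> 'a \<Rightarrow> ereal" where
  "sp_dist E w u v =
     (INF p \<in> {p. is_walk E p \<and> hd p = u \<and> last p = v}. ereal (walk_weight w p))"

text \<open>P \<ll> Q is "absolutely_continuous Q P".\<close>

definition D_inf :: "'b measure \<Rightarrow> 'b measure \<Rightarrow> ereal" where
  "D_inf P Q = (if absolutely_continuous Q P
     then (SUP S \<in> {S \<in> sets P. measure P S > 0}. ereal (ln (measure P S / measure Q S)))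
     else \<infinity>)"

definition renyi_div :: "real \<Rightarrow> 'b measure \<Rightarrow> 'b measure \<Rightarrow> ereal" where
  "renyi_div lam P Q = (if absolutely_continuous Q P
     then (let I = (\<integral>\<^sup>+ x. ennreal ((enn2real (RN_deriv Q P x)) powr (lam - 1)) \<partial>P)
           in if I = \<infinity> then \<infinity> else ereal (ln (enn2real I) / (lam - 1)))
     else \<infinity>)"

definition D_star :: "'b measure \<Rightarrow> 'b measure \<Rightarrow> ereal" where
  "D_star P Q = (SUP lam \<in> {1<..}. renyi_div lam P Q / ereal lam)"

definition neighbours :: "nat \<Rightarrow> 'a list \<Rightarrow> 'a list \<Rightarrow> nat \<Rightarrow> bool" where
  "neighbours n x x' i \<longleftrightarrow> length x = n \<and> length x' = n \<and> i < n \<and>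
     (\<forall>j<n. j \<noteq> i \<longrightarrow> x ! j = x' ! j)"

text \<open>\<epsilon> may take the value \<infinity>, in which case the constraint is vacuous (e^\<infinity> = \<infinity>).\<close>
definition partial_DP :: "nat \<Rightarrow> ('a list \<Rightarrow> 'b measure) \<Rightarrow> ('a \<Rightarrow> 'a \<Rightarrow> ereal) \<Rightarrow> bool" where
  "partial_DP n M \<epsilon> \<longleftrightarrow> (\<forall>x x' i. neighbours n x x' i \<longrightarrow>
     (\<forall>S \<in> sets (M x). \<epsilon> (x ! i) (x' ! i) = \<infinity> \<or>
        measure (M x) S \<le> exp (real_of_ereal (\<epsilon> (x ! i) (x' ! i))) * measure (M x') S))"

definition partial_CDP :: "nat \<Rightarrow> ('a list \<Rightarrow> 'b measure) \<Rightarrow> ('a \<Rightarrow> 'a \<Rightarrow> ereal) \<Rightarrow> bool" where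
  "partial_CDP n M \<epsilon> \<longleftrightarrow> (\<forall>x x' i. neighbours n x x' i \<longrightarrow>
     D_star (M x) (M x') \<le> (\<epsilon> (x ! i) (x' ! i))\<^sup>2 / 2)"

end

theory Submission
  imports Defs
begin


lemma holder_nn:
  fixes F G :: "'a \<Rightarrow> real"
  assumes F[measurable]: "F \<in> borel_measurable M" and G[measurable]: "G \<in> borel_measurable M"
    and nF: "\<And>x. 0 \<le> F x" and nG: "\<And>x. 0 \<le> G x"
    and p: "p > 1" "q > 1" "1/p + 1/q = 1"
    and A: "(\<integral>\<^sup>+x. ennreal (F x powr p) \<partial>M) = ennreal A" "A > 0"
    and B: "(\<integral>\<^sup>+x. ennreal (G x powr q) \<partial>M) = ennreal B" "B > 0"
  shows "(\<integral>\<^sup>+x. ennreal (F x * G x) \<partial>M) \<le> ennreal (A powr (1/p) * B powr (1/q))"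
proof -
  define a where "a = A powr (1/p)"
  define b where "b = B powr (1/q)"
  have a0: "a > 0" "b > 0" using A B by (auto simp: a_def b_def)
  have ap: "a powr p = A" using A p by (simp add: a_def powr_powr)
  have bq: "b powr q = B" using B p by (simp add: b_def powr_powr)
  have pw: "F x * G x \<le> (a*b/(A*p)) * F x powr p + (a*b/(B*q)) * G x powr q" for x
  proof -
    have "(F x / a) * (G x / b) \<le> (F x / a) powr p / p + (G x / b) powr q / q"
      using Youngs_inequality[OF p, of "F x / a" "G x / b"] nF[of x] nG[of x] a0 by simp
    also have "\<dots> = F x powr p / (A*p) + G x powr q / (B*q)"
      using nF nG a0 by (simp add: powr_divide ap bq)
    finally have "a*b*((F x / a) * (G x / b)) \<le> a*b*(F x powr p / (A*p) + G x powr q / (B*q))"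
      using a0 by (intro mult_left_mono) auto
    then show ?thesis using a0 by (simp add: field_simps)
  qed
  have "(\<integral>\<^sup>+x. ennreal (F x * G x) \<partial>M) \<le>
      (\<integral>\<^sup>+x. ennreal (a*b/(A*p)) * ennreal (F x powr p) + ennreal (a*b/(B*q)) * ennreal (G x powr q) \<partial>M)"
  proof (rule nn_integral_mono)
    fix x
    have c: "0 \<le> a*b/(A*p)" "0 \<le> a*b/(B*q)" using a0 A B p by auto
    have "ennreal (F x * G x) \<le> ennreal (a*b/(A*p) * F x powr p + a*b/(B*q) * G x powr q)"
      by (rule ennreal_leI[OF pw])
    also have "\<dots> = ennreal (a*b/(A*p) * F x powr p) + ennreal (a*b/(B*q) * G x powr q)"
      by (intro ennreal_plus mult_nonneg_nonneg c(1) c(2) powr_ge_zero)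
    also have "\<dots> = ennreal (a*b/(A*p)) * ennreal (F x powr p) + ennreal (a*b/(B*q)) * ennreal (G x powr q)"
      using c by (simp only: ennreal_mult[OF c(1) powr_ge_zero] ennreal_mult[OF c(2) powr_ge_zero])
    finally show "ennreal (F x * G x) \<le> ennreal (a*b/(A*p)) * ennreal (F x powr p) + ennreal (a*b/(B*q)) * ennreal (G x powr q)" .
  qed
  also have "\<dots> = ennreal (a*b/(A*p)) * ennreal A + ennreal (a*b/(B*q)) * ennreal B"
    by (simp add: nn_integral_add nn_integral_cmult A B)
  also have "\<dots> = ennreal (a*b*(1/p+1/q))"
  proof -
    have "ennreal (a*b/(A*p)) * ennreal A + ennreal (a*b/(B*q)) * ennreal B = ennreal (a*b/(A*p)*A) + ennreal (a*b/(B*q) * B)"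
      using a0 A B p by (simp only: ennreal_mult[symmetric] less_imp_le divide_nonneg_nonneg mult_nonneg_nonneg)
    also have "\<dots> = ennreal (a*b/(A*p)*A + a*b/(B*q) * B)"
      using a0 A B p by (intro ennreal_plus[symmetric]) auto
    also have "a*b/(A*p)*A + a*b/(B*q) * B = a*b*(1/p+1/q)" using A B p by (simp add: field_simps)
    finally show ?thesis .
  qed
  finally show ?thesis using p by (simp add: a_def b_def)
qed


lemma ereal_div_ereal: "y \<noteq> 0 \<Longrightarrow> ereal x / ereal y = ereal (x / y)"
  by (simp add: divide_ereal_def divide_inverse)

lemma renyi_density:
  assumes Q: "prob_space Q" and h[measurable]: "h \<in> borel_measurable Q" and hn: "\<And>x. 0 \<le> h x"
    and P: "P = density Q (\<lambda>x. ennreal (h x))" and lam: "lam > 1"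
  shows "renyi_div lam P Q = (let I = (\<integral>\<^sup>+x. ennreal (h x powr lam) \<partial>Q)
           in if I = \<infinity> then \<infinity> else ereal (ln (enn2real I) / (lam - 1)))"
proof -
  interpret Q: prob_space Q by fact
  have ac: "absolutely_continuous Q P" unfolding P by (rule absolutely_continuousI_density) simp
  have ae: "AE x in Q. ennreal (h x) = RN_deriv Q P x"
    unfolding P by (rule Q.RN_deriv_unique) auto
  have "(\<integral>\<^sup>+ x. ennreal ((enn2real (RN_deriv Q P x)) powr (lam - 1)) \<partial>P)
      = (\<integral>\<^sup>+ x. ennreal (h x) * ennreal ((enn2real (RN_deriv Q P x)) powr (lam - 1)) \<partial>Q)"
    unfolding P by (subst nn_integral_density) auto
  also have "\<dots> = (\<integral>\<^sup>+x. ennreal (h x powr lam) \<partial>Q)"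
  proof (rule nn_integral_cong_AE)
    show "AE x in Q. ennreal (h x) * ennreal ((enn2real (RN_deriv Q P x)) powr (lam - 1)) = ennreal (h x powr lam)"
      using ae
    proof eventually_elim
      case (elim x)
      then have e: "enn2real (RN_deriv Q P x) = h x" using hn[of x] by (metis enn2real_ennreal)
      have "h x * h x powr (lam - 1) = h x powr lam"
      proof (cases "h x = 0")
        case False
        have "h x powr lam = h x powr (1 + (lam - 1))" by simp
        also have "\<dots> = h x powr 1 * h x powr (lam - 1)" by (rule powr_add)
        also have "h x powr 1 = h x" using hn[of x] by (rule powr_one)
        finally show ?thesis by simp
      qed simp
      then show ?case using e hn[of x] by (simp add: ennreal_mult[symmetric])
    qed
  qed
  finally show ?thesis unfolding renyi_div_def using ac by simp
qed

lemma J_pos: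
  assumes Pp: "prob_space (density Q (\<lambda>x. ennreal (h x)))" and h[measurable]: "h \<in> borel_measurable Q"
    and hn: "\<And>x. 0 \<le> h x" and mu: "mu > 0"
  shows "(\<integral>\<^sup>+x. ennreal (h x powr mu) \<partial>Q) \<noteq> 0"
proof
  assume "(\<integral>\<^sup>+x. ennreal (h x powr mu) \<partial>Q) = 0"
  then have "AE x in Q. ennreal (h x powr mu) = 0" by (subst (asm) nn_integral_0_iff_AE) auto
  then have ae: "AE x in Q. ennreal (h x) = 0"
    by eventually_elim (use hn in auto)
  have "emeasure (density Q (\<lambda>x. ennreal (h x))) (space Q) = (\<integral>\<^sup>+x. ennreal (h x) * indicator (space Q) x \<partial>Q)"
    by (rule emeasure_density) auto
  also have "\<dots> = 0" by (subst nn_integral_0_iff_AE) (use ae in auto)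
  finally show False using prob_space.emeasure_space_1[OF Pp] by simp
qed

lemma Dstar_le_iff: "D_star P Q \<le> ereal c \<longleftrightarrow> (\<forall>lam>1. renyi_div lam P Q / ereal lam \<le> ereal c)"
  unfolding D_star_def by (auto simp: SUP_le_iff)

lemma J_bound:
  assumes Q: "prob_space Q" and h[measurable]: "h \<in> borel_measurable Q" and hn: "\<And>x. 0 \<le> h x"
    and P: "P = density Q (\<lambda>x. ennreal (h x))" and D: "D_star P Q \<le> ereal c" and mu: "mu > 1"
  shows "(\<integral>\<^sup>+x. ennreal (h x powr mu) \<partial>Q) \<noteq> \<infinity>"
    and "ln (enn2real (\<integral>\<^sup>+x. ennreal (h x powr mu) \<partial>Q)) \<le> (mu - 1) * mu * c"
proof -
  define I where "I = (\<integral>\<^sup>+x. ennreal (h x powr mu) \<partial>Q)"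
  have r: "renyi_div mu P Q / ereal mu \<le> ereal c" using D mu by (simp add: Dstar_le_iff)
  have rd: "renyi_div mu P Q = (if I = \<infinity> then \<infinity> else ereal (ln (enn2real I) / (mu - 1)))"
    using renyi_density[OF Q h hn P mu] by (simp add: I_def Let_def)
  show fin: "I \<noteq> \<infinity>"
  proof
    assume "I = \<infinity>"
    then have "renyi_div mu P Q / ereal mu = \<infinity>" using rd mu by (simp add: divide_ereal_def)
    then show False using r by simp
  qed
  then have "ereal (ln (enn2real I) / (mu - 1) / mu) \<le> ereal c" using r rd mu by (simp add: ereal_div_ereal)
  then have "ln (enn2real I) / (mu - 1) / mu \<le> c" by simp
  then show "ln (enn2real I) \<le> (mu - 1) * mu * c" using mu by (simp add: field_simps)
qed


lemma mul_powr_Suc: "0 \<le> (x::real) \<Longrightarrow> x * x powr s = x powr (s + 1)"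
proof (cases "x = 0")
  case False
  assume x: "0 \<le> x"
  have "x powr (s + 1) = x powr s * x powr 1" by (rule powr_add)
  also have "x powr 1 = x" using x by (rule powr_one)
  finally show ?thesis by simp
qed simp

lemma Dstar_density:
  assumes P: "prob_space P" and Q: "prob_space Q" and sPQ: "sets P = sets Q"
    and D: "D_star P Q \<le> ereal c"
  shows "\<exists>h. h \<in> borel_measurable Q \<and> (\<forall>x. 0 \<le> h x) \<and> P = density Q (\<lambda>x. ennreal (h x))"
proof -
  interpret Q: prob_space Q by fact
  interpret P: prob_space P by fact
  have ac: "absolutely_continuous Q P"
  proof (rule ccontr)
    assume "\<not> absolutely_continuous Q P"
    then have "renyi_div 2 P Q / ereal 2 = \<infinity>" by (simp add: renyi_div_def divide_ereal_def)
    moreover have "renyi_div 2 P Q / ereal 2 \<le> ereal c" using D by (simp add: Dstar_le_iff)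
    ultimately show False by simp
  qed
  have "density Q (RN_deriv Q P) = P" by (rule Q.density_RN_deriv[OF ac sPQ])
  moreover have "density Q (RN_deriv Q P) = density Q (\<lambda>x. ennreal (enn2real (RN_deriv Q P x)))"
  proof (rule density_cong)
    show "AE x in Q. RN_deriv Q P x = ennreal (enn2real (RN_deriv Q P x))"
      using Q.RN_deriv_finite[OF P.sigma_finite_measure_axioms ac sPQ]
      by eventually_elim (auto simp: less_top)
  qed auto
  ultimately show ?thesis
    by (intro exI[of _ "\<lambda>x. enn2real (RN_deriv Q P x)"]) auto
qed

lemma opt_arith:
  fixes a b X :: real
  assumes a: "a \<ge> 0" and b: "b \<ge> 0"
    and H: "\<And>u. u > 0 \<Longrightarrow> X \<le> a^2/2 * (1 + u) + b^2/2 * (1 + 1/u)"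
  shows "X \<le> (a + b)^2 / 2"
proof (rule field_le_epsilon)
  fix e :: real assume e: "e > 0"
  define d where "d = 2 * e / (a + b + 1)"
  have d: "d > 0" using a b e by (simp add: d_def)
  define u where "u = (b + d) / (a + d)"
  have u: "u > 0" using a b d by (simp add: u_def)
  have X: "X \<le> a^2/2 * (1 + u) + b^2/2 * (1 + 1/u)" using H u .
  have 1: "a^2 * u \<le> a * (b + d)"
  proof -
    have "a^2 * u = a * (b + d) * (a / (a + d))" using a d by (simp add: u_def power2_eq_square field_simps)
    also have "\<dots> \<le> a * (b + d) * 1" using a b d by (intro mult_left_mono) auto
    finally show ?thesis by simp
  qed
  have 2: "b^2 * (1/u) \<le> b * (a + d)"
  proof -
    have "b^2 * (1/u) = b * (a + d) * (b / (b + d))" using b d a by (simp add: u_def power2_eq_square field_simps)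
    also have "\<dots> \<le> b * (a + d) * 1" using a b d by (intro mult_left_mono) auto
    finally show ?thesis by simp
  qed
  have "a^2/2 * (1 + u) + b^2/2 * (1 + 1/u) = (a^2 + a^2 * u + b^2 + b^2 * (1/u)) / 2"
    by (simp add: field_simps)
  also have "\<dots> \<le> (a^2 + a * (b + d) + b^2 + b * (a + d)) / 2" using 1 2 by (simp only: divide_right_mono add_mono order_refl zero_le_numeral)
  also have "\<dots> = (a + b)^2 / 2 + d * (a + b) / 2" by (simp add: power2_eq_square field_simps)
  also have "d * (a + b) / 2 \<le> e"
  proof -
    have "d * (a + b) \<le> d * (a + b + 1)" using d by simp
    also have "\<dots> = 2 * e" using a b by (simp add: d_def)
    finally show ?thesis by simp
  qed
  finally show "X \<le> (a + b)^2 / 2 + e" using X by simp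
qed


lemma compose_CDP:
  assumes P: "prob_space P" and Q: "prob_space Q" and R: "prob_space R"
    and sP: "sets P = sets R" and sQ: "sets Q = sets R" and a: "a \<ge> 0" and b: "b \<ge> 0"
    and DPQ: "D_star P Q \<le> ereal (a^2/2)" and DQR: "D_star Q R \<le> ereal (b^2/2)"
  shows "D_star P R \<le> ereal ((a + b)^2/2)"
proof -
  interpret R: prob_space R by fact
  obtain f where f: "f \<in> borel_measurable Q" and fn: "\<And>x. 0 \<le> f x"
    and Pf: "P = density Q (\<lambda>x. ennreal (f x))"
    using Dstar_density[OF P Q _ DPQ] sP sQ by auto
  obtain g where g[measurable]: "g \<in> borel_measurable R" and gn: "\<And>x. 0 \<le> g x"
    and Qg: "Q = density R (\<lambda>x. ennreal (g x))"
    using Dstar_density[OF Q R sQ DQR] by auto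
  have fR[measurable]: "f \<in> borel_measurable R" by (subst measurable_cong_sets[OF sQ[symmetric] refl]) (rule f)
  have fQ[measurable]: "f \<in> borel_measurable Q" by fact
  have PR: "P = density R (\<lambda>x. ennreal (g x * f x))"
    unfolding Pf Qg by (subst density_density_eq) (auto simp: ennreal_mult gn fn)
  have gQ[measurable]: "g \<in> borel_measurable Q" by (subst measurable_cong_sets[OF sQ refl]) (rule g)
  define \<rho>1 where "\<rho>1 = a^2/2"
  define \<rho>2 where "\<rho>2 = b^2/2"
  show ?thesis unfolding Dstar_le_iff
  proof (intro allI impI)
    fix lam :: real assume lam: "lam > 1"
    define I where "I = (\<integral>\<^sup>+x. ennreal ((g x * f x) powr lam) \<partial>R)"
    have I_Q: "I = (\<integral>\<^sup>+x. ennreal (f x powr lam * g x powr (lam - 1)) \<partial>Q)"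
    proof -
      have "(\<integral>\<^sup>+x. ennreal (f x powr lam * g x powr (lam - 1)) \<partial>Q)
          = (\<integral>\<^sup>+x. ennreal (g x) * ennreal (f x powr lam * g x powr (lam - 1)) \<partial>R)"
        unfolding Qg by (subst nn_integral_density) auto
      also have "\<dots> = I" unfolding I_def
      proof (rule nn_integral_cong)
        fix x
        have "g x * (f x powr lam * g x powr (lam - 1)) = f x powr lam * (g x * g x powr (lam - 1))" by simp
        also have "g x * g x powr (lam - 1) = g x powr lam" using mul_powr_Suc[OF gn[of x], of "lam - 1"] by simp
        also have "f x powr lam * g x powr lam = (g x * f x) powr lam" using fn gn by (simp add: powr_mult)
        finally show "ennreal (g x) * ennreal (f x powr lam * g x powr (lam - 1)) = ennreal ((g x * f x) powr lam)"
          using fn gn by (simp add: ennreal_mult[symmetric])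
      qed
      finally show ?thesis by simp
    qed
    have Ipos: "I \<noteq> 0" unfolding I_def
      by (rule J_pos) (use P PR gn fn lam in auto)
    have key: "I \<noteq> \<infinity> \<and> ln (enn2real I) \<le> lam * (lam - 1) * (\<rho>1 * (1 + u) + \<rho>2 * (1 + 1/u))"
      if u: "u > 0" for u
    proof -
      define p where "p = 1 + u * (lam - 1) / lam"
      define q where "q = 1 + lam / (u * (lam - 1))"
      have p1: "p > 1" using u lam by (simp add: p_def)
      have q1: "q > 1" using u lam by (simp add: q_def)
      define t where "t = u * (lam - 1) / lam"
      have t: "t > 0" using u lam by (simp add: t_def)
      have pt: "p = 1 + t" by (simp add: p_def t_def)
      have qt: "q = 1 + 1/t" using u lam by (simp add: q_def t_def)
      have "1/(1 + 1/t) = t / (1 + t)" using t by (simp add: field_simps)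
      then have pq: "1/p + 1/q = 1" using t unfolding pt qt by (simp add: add_divide_distrib[symmetric])
      define A' where "A' = (\<integral>\<^sup>+x. ennreal (f x powr (lam * p)) \<partial>Q)"
      define B' where "B' = (\<integral>\<^sup>+x. ennreal (g x powr ((lam - 1) * q + 1)) \<partial>R)"
      have mu1: "lam * p > 1" using lam p1 by (metis less_1_mult order.strict_trans)
      have mu2: "(lam - 1) * q + 1 > 1" using lam q1 by simp
      have A'fin: "A' \<noteq> \<infinity>" and lnA: "ln (enn2real A') \<le> (lam * p - 1) * (lam * p) * \<rho>1"
        using J_bound[OF Q fQ fn Pf DPQ[folded \<rho>1_def] mu1] by (simp_all add: A'_def)
      have B'fin: "B' \<noteq> \<infinity>" and lnB: "ln (enn2real B') \<le> ((lam - 1) * q + 1 - 1) * ((lam - 1) * q + 1) * \<rho>2"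
        using J_bound[OF R g gn Qg DQR[folded \<rho>2_def] mu2] by (simp_all add: B'_def)
      have A'0: "A' \<noteq> 0" unfolding A'_def by (rule J_pos) (use P Pf fn mu1 in auto)
      have B'0: "B' \<noteq> 0" unfolding B'_def by (rule J_pos) (use Q Qg gn mu2 in auto)
      define A where "A = enn2real A'"
      define B where "B = enn2real B'"
      have A: "A' = ennreal A" "A > 0" using A'fin A'0 by (auto simp: A_def enn2real_positive_iff less_top[symmetric] zero_less_iff_neq_zero)
      have B: "B' = ennreal B" "B > 0" using B'fin B'0 by (auto simp: B_def enn2real_positive_iff less_top[symmetric] zero_less_iff_neq_zero)
      have B'Q: "B' = (\<integral>\<^sup>+x. ennreal (g x powr ((lam - 1) * q)) \<partial>Q)"
      proof -
        have "(\<integral>\<^sup>+x. ennreal (g x powr ((lam - 1) * q)) \<partial>Q)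
            = (\<integral>\<^sup>+x. ennreal (g x) * ennreal (g x powr ((lam - 1) * q)) \<partial>R)"
          unfolding Qg by (subst nn_integral_density) auto
        also have "\<dots> = B'" unfolding B'_def
          by (rule nn_integral_cong) (simp add: ennreal_mult[symmetric] gn mul_powr_Suc)
        finally show ?thesis by simp
      qed
      have hol: "I \<le> ennreal (A powr (1/p) * B powr (1/q))"
        unfolding I_Q
      proof (rule holder_nn[OF _ _ _ _ p1 q1 pq])
        show "(\<integral>\<^sup>+x. ennreal ((f x powr lam) powr p) \<partial>Q) = ennreal A"
          using A(1) by (simp add: A'_def powr_powr)
        show "(\<integral>\<^sup>+x. ennreal ((g x powr (lam - 1)) powr q) \<partial>Q) = ennreal B"
          using B(1) B'Q by (simp add: powr_powr)
      qed (use A B in auto)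
      have Ifin: "I \<noteq> \<infinity>" using hol by (auto simp: top_unique)
      have "enn2real I \<le> A powr (1/p) * B powr (1/q)"
        using hol A B by (simp add: enn2real_leI)
      moreover have "enn2real I > 0" using Ifin Ipos by (simp add: enn2real_positive_iff less_top[symmetric] zero_less_iff_neq_zero)
      ultimately have "ln (enn2real I) \<le> ln (A powr (1/p) * B powr (1/q))" by simp
      also have "\<dots> = ln A / p + ln B / q" using A B by (simp add: ln_mult ln_powr)
      also have "\<dots> \<le> (lam * p - 1) * (lam * p) * \<rho>1 / p + ((lam - 1) * q + 1 - 1) * ((lam - 1) * q + 1) * \<rho>2 / q"
        by (intro add_mono divide_right_mono) (use lnA lnB p1 q1 in \<open>simp_all add: A_def B_def\<close>)
      also have "\<dots> = lam * (lam - 1) * (\<rho>1 * (1 + u) + \<rho>2 * (1 + 1/u))"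
      proof -
        have e1: "lam * p - 1 = (lam - 1) * (1 + u)" using lam by (simp add: p_def field_simps)
        have e2: "(lam - 1) * q + 1 = lam * (1 + 1/u)" using lam u by (simp add: q_def field_simps)
        have "(lam * p - 1) * (lam * p) * \<rho>1 / p = (lam * p - 1) * lam * \<rho>1" using p1 by simp
        also have "\<dots> = (lam - 1) * (1 + u) * lam * \<rho>1" by (simp only: e1)
        finally have x1: "(lam * p - 1) * (lam * p) * \<rho>1 / p = (lam - 1) * (1 + u) * lam * \<rho>1" .
        have "((lam - 1) * q + 1 - 1) * ((lam - 1) * q + 1) * \<rho>2 / q = (lam - 1) * ((lam - 1) * q + 1) * \<rho>2" using q1 by simp
        also have "\<dots> = (lam - 1) * (lam * (1 + 1/u)) * \<rho>2" by (simp only: e2)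
        finally have x2: "((lam - 1) * q + 1 - 1) * ((lam - 1) * q + 1) * \<rho>2 / q = (lam - 1) * (lam * (1 + 1/u)) * \<rho>2" .
        show ?thesis unfolding x1 x2 using u by (simp add: field_simps)
      qed
      finally show ?thesis using Ifin by simp
    qed
    have Ifin: "I \<noteq> \<infinity>" using key[of 1] by simp
    have rd: "renyi_div lam P R = ereal (ln (enn2real I) / (lam - 1))"
      using renyi_density[of R "\<lambda>x. g x * f x" P lam] R PR gn fn lam Ifin by (simp add: I_def Let_def)
    have "ln (enn2real I) / (lam - 1) / lam \<le> (a + b)^2/2"
    proof (rule opt_arith[OF a b])
      fix u :: real assume "u > 0"
      then have "ln (enn2real I) \<le> lam * (lam - 1) * (\<rho>1 * (1 + u) + \<rho>2 * (1 + 1/u))" using key by blast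
      then show "ln (enn2real I) / (lam - 1) / lam \<le> a^2/2 * (1 + u) + b^2/2 * (1 + 1/u)"
        using lam by (simp add: \<rho>1_def \<rho>2_def field_simps)
    qed
    then show "renyi_div lam P R / ereal lam \<le> ereal ((a + b)^2/2)"
      using rd lam by (simp add: ereal_div_ereal)
  qed
qed


lemma refl_CDP:
  assumes P: "prob_space P"
  shows "D_star P P \<le> ereal 0"
  unfolding Dstar_le_iff
proof (intro allI impI)
  fix lam :: real assume lam: "lam > 1"
  interpret P: prob_space P by fact
  have PP: "P = density P (\<lambda>x. ennreal 1)" by (simp add: density_1)
  have "renyi_div lam P P = (let I = (\<integral>\<^sup>+x. ennreal (1 powr lam) \<partial>P)
           in if I = \<infinity> then \<infinity> else ereal (ln (enn2real I) / (lam - 1)))"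
    by (rule renyi_density[OF P _ _ PP lam]) auto
  also have "(\<integral>\<^sup>+x. ennreal (1 powr lam) \<partial>P) = 1"
    using P.emeasure_space_1 by simp
  finally show "renyi_div lam P P / ereal lam \<le> ereal 0" by simp
qed

lemma Dinf_imp:
  assumes P: "prob_space P" and Q: "prob_space Q" and sPQ: "sets P = sets Q"
    and D: "D_inf P Q \<le> ereal c" and S: "S \<in> sets P"
  shows "measure P S \<le> exp c * measure Q S"
proof (cases "measure P S > 0")
  case False
  then show ?thesis by (simp add: not_less) (smt (verit) exp_gt_zero measure_nonneg mult_nonneg_nonneg)
next
  case True
  interpret P: prob_space P by fact
  interpret Q: prob_space Q by fact
  have ac: "absolutely_continuous Q P"
  proof (rule ccontr)
    assume "\<not> absolutely_continuous Q P"
    then show False using D by (simp add: D_inf_def)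
  qed
  have "measure Q S > 0"
  proof (rule ccontr)
    assume "\<not> measure Q S > 0"
    then have "measure Q S = 0" using measure_nonneg[of Q S] by simp
    then have "S \<in> null_sets Q" using S sPQ by (simp add: Q.emeasure_eq_measure null_sets_def)
    then have "S \<in> null_sets P" using ac by (auto simp: absolutely_continuous_def)
    then show False using True by (simp add: P.emeasure_eq_measure null_sets_def)
  qed
  have "ereal (ln (measure P S / measure Q S)) \<le> D_inf P Q"
    unfolding D_inf_def using ac True S by (auto intro!: SUP_upper)
  then have "ereal (ln (measure P S / measure Q S)) \<le> ereal c" using D by (rule order.trans)
  then have "ln (measure P S / measure Q S) \<le> c" by simp
  moreover have "measure P S / measure Q S = exp (ln (measure P S / measure Q S))"
    using True \<open>measure Q S > 0\<close> by simp
  ultimately have "measure P S / measure Q S \<le> exp c" by (metis exp_le_cancel_iff)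
  then show ?thesis using \<open>measure Q S > 0\<close> by (simp add: divide_le_eq)
qed


lemma walk_chain:
  fixes Rel :: "'b measure \<Rightarrow> 'b measure \<Rightarrow> real \<Rightarrow> bool"
    and M :: "'a list \<Rightarrow> 'b measure"
  assumes Rrefl: "\<And>x. length x = n \<Longrightarrow> Rel (M x) (M x) 0"
    and Rtrans: "\<And>x y z a b. length x = n \<Longrightarrow> length y = n \<Longrightarrow> length z = n \<Longrightarrow> 0 \<le> a \<Longrightarrow> 0 \<le> b
        \<Longrightarrow> Rel (M x) (M y) a \<Longrightarrow> Rel (M y) (M z) b \<Longrightarrow> Rel (M x) (M z) (a + b)"
    and Rstep: "\<And>x x' i. neighbours n x x' i \<Longrightarrow> {x ! i, x' ! i} \<in> E \<Longrightarrow> Rel (M x) (M x') (w {x ! i, x' ! i})"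
    and nonneg: "\<forall>e\<in>E. w e \<ge> 0"
  shows "is_walk E p \<Longrightarrow> length x = n \<Longrightarrow> i < n \<Longrightarrow> x ! i = hd p \<Longrightarrow>
     Rel (M x) (M (x[i := last p])) (walk_weight w p) \<and> walk_weight w p \<ge> 0"
proof (induction p arbitrary: x rule: induct_list012)
  case 1
  then show ?case by (simp add: is_walk_def)
next
  case (2 a)
  have xa: "x ! i = a" using 2(4) by simp
  have e: "x[i := last [a]] = x" using list_update_id[of x i, unfolded xa] by simp
  show ?case using Rrefl[OF 2(2)] unfolding e by simp
next
  case (3 a b rest)
  have W: "\<And>k. Suc k < length (a # b # rest) \<Longrightarrow> {(a # b # rest) ! k, (a # b # rest) ! Suc k} \<in> E"
    using 3(3) unfolding is_walk_def by blast
  have wk: "is_walk E (b # rest)" unfolding is_walk_def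
  proof (intro conjI allI impI)
    fix k assume "Suc k < length (b # rest)"
    then have "Suc (Suc k) < length (a # b # rest)" by simp
    from W[OF this] show "{(b # rest) ! k, (b # rest) ! Suc k} \<in> E" by simp
  qed simp
  have edge: "{a, b} \<in> E" using W[of 0] by simp
  define y where "y = x[i := b]"
  have ly: "length y = n" using 3 by (simp add: y_def)
  have nb: "neighbours n x y i" using 3 by (auto simp: neighbours_def y_def)
  have xi: "x ! i = a" using 3 by simp
  have yi: "y ! i = b" using 3 by (simp add: y_def)
  have R1: "Rel (M x) (M y) (w {a, b})" using Rstep[OF nb] edge xi yi by simp
  have IH: "Rel (M y) (M (y[i := last (b # rest)])) (walk_weight w (b # rest)) \<and> walk_weight w (b # rest) \<ge> 0"
    using 3(2)[OF wk ly 3(5)] yi by simp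
  have yy: "y[i := last (b # rest)] = x[i := last (a # b # rest)]" by (simp add: y_def)
  have wab: "w {a, b} \<ge> 0" using nonneg edge by auto
  have lz: "length (x[i := last (a # b # rest)]) = n" using 3 by simp
  show ?case using Rtrans[OF 3(4) ly lz wab _ R1] IH yy wab by simp
qed


lemma neighbours_update: "neighbours n x x' i \<Longrightarrow> x' = x[i := x' ! i]"
  unfolding neighbours_def by (intro nth_equalityI) (auto simp: nth_list_update)

lemma sp_dist_nonneg_or:
  assumes nonneg: "\<forall>e\<in>E. w e \<ge> 0"
  shows "walk_weight w p \<ge> 0 \<or> \<not> is_walk E p"
proof -
  have "is_walk E p \<Longrightarrow> walk_weight w p \<ge> 0"
  proof (induction p rule: induct_list012)
    case (3 a b rest)
    have W: "\<And>k. Suc k < length (a # b # rest) \<Longrightarrow> {(a # b # rest) ! k, (a # b # rest) ! Suc k} \<in> E"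
      using 3(3) unfolding is_walk_def by blast
    have wk: "is_walk E (b # rest)" unfolding is_walk_def
    proof (intro conjI allI impI)
      fix k assume "Suc k < length (b # rest)"
      then have "Suc (Suc k) < length (a # b # rest)" by simp
      from W[OF this] show "{(b # rest) ! k, (b # rest) ! Suc k} \<in> E" by simp
    qed simp
    have edge: "{a, b} \<in> E" using W[of 0] by simp
    then show ?case using 3(2)[OF wk] nonneg by simp
  qed simp_all
  then show ?thesis by blast
qed

lemma le_eps_exp:
  fixes PS QS e :: real
  assumes PS: "PS \<ge> 0" and QS: "QS \<ge> 0" and H: "\<And>d. d > 0 \<Longrightarrow> PS \<le> exp (e + d) * QS"
  shows "PS \<le> exp e * QS"
proof (cases "PS = 0")
  case True then show ?thesis using QS by simp
next
  case False
  then have PS0: "PS > 0" using PS by simp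
  have QS0: "QS > 0"
  proof (rule ccontr)
    assume "\<not> QS > 0" then have "QS = 0" using QS by simp
    then show False using H[of 1] PS0 by simp
  qed
  have "ln PS \<le> e + ln QS"
  proof (rule field_le_epsilon)
    fix d :: real assume d: "d > 0"
    have "ln PS \<le> ln (exp (e + d) * QS)" using H[OF d] PS0 by simp
    also have "\<dots> = e + ln QS + d" using QS0 by (simp add: ln_mult)
    finally show "ln PS \<le> e + ln QS + d" .
  qed
  then have "exp (ln PS) \<le> exp (e + ln QS)" by simp
  then show ?thesis using PS0 QS0 by (simp add: exp_add)
qed

lemma le_eps_sq:
  fixes D :: ereal and e :: real
  assumes e: "e \<ge> 0" and H: "\<And>d. d > 0 \<Longrightarrow> D \<le> ereal ((e + d)^2 / 2)"
  shows "D \<le> ereal (e^2 / 2)"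
proof (cases D)
  case (real r)
  have "r \<le> e^2/2"
  proof (rule field_le_epsilon)
    fix t :: real assume t: "t > 0"
    define d where "d = min 1 (t / (e + 1))"
    have d: "d > 0" "d \<le> 1" "d \<le> t / (e + 1)" using t e by (auto simp: d_def)
    have "r \<le> (e + d)^2 / 2" using H[OF d(1)] real by simp
    also have "\<dots> = e^2/2 + d * (e + d/2)" by (simp add: power2_eq_square field_simps)
    also have "d * (e + d/2) \<le> d * (e + 1)" using d by (intro mult_left_mono) auto
    also have "d * (e + 1) \<le> t" using d e by (simp add: field_simps)
    finally show "r \<le> e^2/2 + t" by simp
  qed
  then show ?thesis using real by simp
next
  case PInf
  then show ?thesis using H[of 1] by simp
qed simp

theorem lemma2p7:
  fixes E :: "'a set set" and w :: "'a set \<Rightarrow> real" and n :: nat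
    and M :: "'a list \<Rightarrow> 'b measure" and Y :: "'b measure"
  assumes graph: "undirected_graph E"
    and nonneg: "\<forall>e\<in>E. w e \<ge> 0"
    and prob: "\<forall>x. length x = n \<longrightarrow> prob_space (M x) \<and> sets (M x) = sets Y"
  shows "((\<forall>x x' i. neighbours n x x' i \<and> {x ! i, x' ! i} \<in> E \<longrightarrow>
              D_inf (M x) (M x') \<le> ereal (w {x ! i, x' ! i}))
            \<longrightarrow> partial_DP n M (sp_dist E w))
       \<and> ((\<forall>x x' i. neighbours n x x' i \<and> {x ! i, x' ! i} \<in> E \<longrightarrow>
              D_star (M x) (M x') \<le> ereal ((w {x ! i, x' ! i})\<^sup>2 / 2))
            \<longrightarrow> partial_CDP n M (sp_dist E w))"
proof -
  have spd: "\<exists>e. sp_dist E w u v = ereal e \<and> e \<ge> 0 \<and>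
      (\<forall>d>0. \<exists>p. is_walk E p \<and> hd p = u \<and> last p = v \<and> walk_weight w p < e + d)"
    if fin: "sp_dist E w u v \<noteq> \<infinity>" for u v
  proof -
    let ?W = "{p. is_walk E p \<and> hd p = u \<and> last p = v}"
    have ge0: "sp_dist E w u v \<ge> 0" unfolding sp_dist_def
      by (rule INF_greatest) (use sp_dist_nonneg_or[OF nonneg] in force)
    then obtain e where e: "sp_dist E w u v = ereal e" "e \<ge> 0" using fin
      by (cases "sp_dist E w u v") auto
    have "\<exists>p. is_walk E p \<and> hd p = u \<and> last p = v \<and> walk_weight w p < e + d" if d: "d > 0" for d
    proof -
      have "(INF p \<in> ?W. ereal (walk_weight w p)) < ereal (e + d)"
        using e d by (simp add: sp_dist_def[symmetric])
      then obtain p where "p \<in> ?W" "ereal (walk_weight w p) < ereal (e + d)"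
        by (auto simp: INF_less_iff)
      then show ?thesis by auto
    qed
    with e show ?thesis by blast
  qed
  show ?thesis
  proof (intro conjI impI)
    assume H: "\<forall>x x' i. neighbours n x x' i \<and> {x ! i, x' ! i} \<in> E \<longrightarrow>
              D_inf (M x) (M x') \<le> ereal (w {x ! i, x' ! i})"
    define Rel :: "'b measure \<Rightarrow> 'b measure \<Rightarrow> real \<Rightarrow> bool" where "Rel = (\<lambda>A B a. \<forall>S\<in>sets Y. measure A S \<le> exp a * measure B S)"
    have chain: "Rel (M x) (M (x[i := last p])) (walk_weight w p)"
      if "is_walk E p" "length x = n" "i < n" "x ! i = hd p" for p x i
    proof -
      have "Rel (M x) (M (x[i := last p])) (walk_weight w p) \<and> walk_weight w p \<ge> 0"
      proof (rule walk_chain[where Rel = Rel and M = M and n = n and E = E, OF _ _ _ nonneg that])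
        show "Rel (M x) (M x) 0" if "length x = n" for x unfolding Rel_def by simp
        show "Rel (M x) (M z) (a + b)" if "length x = n" "length y = n" "length z = n" "0 \<le> a" "0 \<le> b"
          "Rel (M x) (M y) a" "Rel (M y) (M z) b" for x y z a b
          unfolding Rel_def
        proof
          fix S assume S: "S \<in> sets Y"
          have "measure (M x) S \<le> exp a * measure (M y) S" using that S by (simp add: Rel_def)
          also have "\<dots> \<le> exp a * (exp b * measure (M z) S)"
            using that S by (intro mult_left_mono) (auto simp: Rel_def)
          finally show "measure (M x) S \<le> exp (a + b) * measure (M z) S" by (simp add: exp_add)
        qed
        show "Rel (M x) (M x') (w {x ! i, x' ! i})" if "neighbours n x x' i" "{x ! i, x' ! i} \<in> E" for x x' i
          unfolding Rel_def
        proof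
          fix S assume S: "S \<in> sets Y"
          have l: "length x = n" "length x' = n" using that by (auto simp: neighbours_def)
          show "measure (M x) S \<le> exp (w {x ! i, x' ! i}) * measure (M x') S"
            by (rule Dinf_imp) (use prob l H that S in auto)
        qed
      qed
      then show ?thesis by simp
    qed
    show "partial_DP n M (sp_dist E w)" unfolding partial_DP_def
    proof (intro allI impI ballI)
      fix x x' :: "'a list" and i :: nat and S assume nb: "neighbours n x x' i" and S: "S \<in> sets (M x)"
      have l: "length x = n" "length x' = n" "i < n" using nb by (auto simp: neighbours_def)
      have SY: "S \<in> sets Y" using S prob l by auto
      have x': "x' = x[i := x' ! i]" using neighbours_update[OF nb] .
      show "sp_dist E w (x ! i) (x' ! i) = \<infinity> \<or>
        measure (M x) S \<le> exp (real_of_ereal (sp_dist E w (x ! i) (x' ! i))) * measure (M x') S"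
      proof (cases "sp_dist E w (x ! i) (x' ! i) = \<infinity>")
        case False
        from spd[OF False] obtain e where e: "sp_dist E w (x ! i) (x' ! i) = ereal e" "e \<ge> 0"
          and walks: "\<And>d. d > 0 \<Longrightarrow> \<exists>p. is_walk E p \<and> hd p = x ! i \<and> last p = x' ! i \<and> walk_weight w p < e + d"
          by blast
        have "measure (M x) S \<le> exp e * measure (M x') S"
        proof (rule le_eps_exp)
          fix d :: real assume d: "d > 0"
          obtain p where p: "is_walk E p" "hd p = x ! i" "last p = x' ! i" "walk_weight w p < e + d"
            using walks[OF d] by blast
          have "Rel (M x) (M (x[i := last p])) (walk_weight w p)" using chain[OF p(1) l(1) l(3)] p(2) by simp
          then have "measure (M x) S \<le> exp (walk_weight w p) * measure (M x') S"
            using SY p(3) x' by (simp add: Rel_def)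
          also have "\<dots> \<le> exp (e + d) * measure (M x') S"
            using p(4) by (intro mult_right_mono) auto
          finally show "measure (M x) S \<le> exp (e + d) * measure (M x') S" .
        qed auto
        then show ?thesis using e by simp
      qed simp
    qed
  next
    assume H: "\<forall>x x' i. neighbours n x x' i \<and> {x ! i, x' ! i} \<in> E \<longrightarrow>
              D_star (M x) (M x') \<le> ereal ((w {x ! i, x' ! i})\<^sup>2 / 2)"
    define Rel :: "'b measure \<Rightarrow> 'b measure \<Rightarrow> real \<Rightarrow> bool" where "Rel = (\<lambda>A B a. D_star A B \<le> ereal (a^2 / 2))"
    have chain: "Rel (M x) (M (x[i := last p])) (walk_weight w p)"
      if "is_walk E p" "length x = n" "i < n" "x ! i = hd p" for p x i
    proof -
      have "Rel (M x) (M (x[i := last p])) (walk_weight w p) \<and> walk_weight w p \<ge> 0"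
      proof (rule walk_chain[where Rel = Rel and M = M and n = n and E = E, OF _ _ _ nonneg that])
        show "Rel (M x) (M x) 0" if "length x = n" for x
          unfolding Rel_def using refl_CDP[of "M x"] prob that by simp
        show "Rel (M x) (M z) (a + b)" if "length x = n" "length y = n" "length z = n" "0 \<le> a" "0 \<le> b"
          "Rel (M x) (M y) a" "Rel (M y) (M z) b" for x y z a b
          unfolding Rel_def
          by (rule compose_CDP[of _ "M y"]) (use prob that in \<open>auto simp: Rel_def\<close>)
        show "Rel (M x) (M x') (w {x ! i, x' ! i})" if "neighbours n x x' i" "{x ! i, x' ! i} \<in> E" for x x' i
          unfolding Rel_def using H that by blast
      qed
      then show ?thesis by simp
    qed
    show "partial_CDP n M (sp_dist E w)" unfolding partial_CDP_def
    proof (intro allI impI)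
      fix x x' :: "'a list" and i :: nat assume nb: "neighbours n x x' i"
      have l: "length x = n" "length x' = n" "i < n" using nb by (auto simp: neighbours_def)
      have x': "x' = x[i := x' ! i]" using neighbours_update[OF nb] .
      show "D_star (M x) (M x') \<le> (sp_dist E w (x ! i) (x' ! i))\<^sup>2 / 2"
      proof (cases "sp_dist E w (x ! i) (x' ! i) = \<infinity>")
        case False
        from spd[OF False] obtain e where e: "sp_dist E w (x ! i) (x' ! i) = ereal e" "e \<ge> 0"
          and walks: "\<And>d. d > 0 \<Longrightarrow> \<exists>p. is_walk E p \<and> hd p = x ! i \<and> last p = x' ! i \<and> walk_weight w p < e + d"
          by blast
        have "D_star (M x) (M x') \<le> ereal (e^2 / 2)"
        proof (rule le_eps_sq[OF e(2)])
          fix d :: real assume d: "d > 0"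
          obtain p where p: "is_walk E p" "hd p = x ! i" "last p = x' ! i" "walk_weight w p < e + d"
            using walks[OF d] by blast
          have "Rel (M x) (M (x[i := last p])) (walk_weight w p)" using chain[OF p(1) l(1) l(3)] p(2) by simp
          then have "D_star (M x) (M x') \<le> ereal ((walk_weight w p)^2 / 2)"
            using p(3) x' by (simp add: Rel_def)
          also have "(walk_weight w p)^2 \<le> (e + d)^2"
            using p(4) sp_dist_nonneg_or[OF nonneg, of p] p(1) by (intro power_mono) auto
          then have "ereal ((walk_weight w p)^2 / 2) \<le> ereal ((e + d)^2 / 2)" by simp
          finally show "D_star (M x) (M x') \<le> ereal ((e + d)^2 / 2)" .
        qed
        also have "ereal (e^2 / 2) = (sp_dist E w (x ! i) (x' ! i))\<^sup>2 / 2"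
          using e by (simp add: power2_eq_square ereal_div_ereal)
        finally show ?thesis .
      next
        case True
        then show ?thesis by simp
      qed
    qed
  qed
qed

end
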